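(* Let $\mathbf{C}\in\mathbb{R}^{n\times n}$ (discrete curl), $\tilde{\mathbf{S}}\in\mathbb{R}^{m\times n}$ (discrete divergence, $-\tilde{\mathbf{S}}^\top$ discrete gradient), $\mathbf{M}_\mu\in\mathbb{R}^{n\times n}$ symmetric positive definite, $\mathbf{M}_\rho\in\mathbb{R}^{n\times n}$, $\mathbf{P}\in\mathbb{R}^{n\times k}$ (reduced cotree projection of a tree-cotree gauge) and $\mathbf{Y}_\mathrm{s}\in\mathbb{R}^{n\times n_\mathrm{s}}$ (discrete winding function) satisfy: $\ker\tilde{\mathbf{S}}^\top=\{\mathbf{0}\}$; $\mathbf{C}\tilde{\mathbf{S}}^\top=\mathbf{0}$ and $\ker\tilde{\mathbf{S}}=\mathrm{im}\,\mathbf{C}^\top$; $\mathbf{K}_\rho=\mathbf{P}^\top\mathbf{C}^\top\mathbf{M}_\rho\mathbf{C}\mathbf{P}$ is nonsingular; and for all $\mathbf{x}\in\mathbb{R}^{n_\mathrm{s}}\setminus\{\mathbf{0}\}$, $\mathbf{y}\in\mathbb{R}^{k}\setminus\{\mathbf{0}\}$: $\mathbf{C}\mathbf{Y}_\mathrm{s}\mathbf{x}\neq\mathbf{0}$ and $\mathbf{C}\mathbf{Y}_\mathrm{s}\mathbf{x}\neq\mathbf{C}\mathbf{P}\mathbf{y}$. Then the gauged, spatially discretised T-$\Omega$ system with circuit coupling \begin{align*} \mathbf{K}_\rho\mathbf{t}_\mathrm{red}+\mathbf{P}^\top\mathbf{M}_\mu\big(\mathbf{P}\tfrac{\mathrm{d}}{\mathrm{d}t}\mathbf{t}_\mathrm{red}+\tilde{\mathbf{S}}^\top\tfrac{\mathrm{d}}{\mathrm{d}t}\Psi+\mathbf{Y}_\mathrm{s}\tfrac{\mathrm{d}}{\mathrm{d}t}\mathbf{i}_\mathrm{s}\big)&=0,\\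 \tilde{\mathbf{S}}\mathbf{M}_\mu\big(\mathbf{P}\mathbf{t}_\mathrm{red}+\tilde{\mathbf{S}}^\top\Psi+\mathbf{Y}_\mathrm{s}\mathbf{i}_\mathrm{s}\big)&=0,\\ \mathbf{Y}_\mathrm{s}^\top\mathbf{M}_\mu\big(\mathbf{P}\tfrac{\mathrm{d}}{\mathrm{d}t}\mathbf{t}_\mathrm{red}+\tilde{\mathbf{S}}^\top\tfrac{\mathrm{d}}{\mathrm{d}t}\Psi+\mathbf{Y}_\mathrm{s}\tfrac{\mathrm{d}}{\mathrm{d}t}\mathbf{i}_\mathrm{s}\big)-\mathbf{v}_\mathrm{s}&=0, \end{align*} with unknowns $\mathbf{x}_\lambda=(\mathbf{t}_\mathrm{red},\Psi)$, current $\mathbf{i}_\lambda=\mathbf{i}_\mathrm{s}$ and voltage $\mathbf{v}_\lambda=\mathbf{v}_\mathrm{s}$, is an inductance-like element.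
   Context: Positive definite means $\mathbf{x}^\top\mathbf{M}\mathbf{x}>0$ for $\mathbf{x}\ne0$. Inductance-like element: a device described by a DAE $\mathbf{F}(\frac{\mathrm{d}}{\mathrm{d}t}\mathbf{x}_\lambda,\frac{\mathrm{d}}{\mathrm{d}t}\mathbf{i}_\lambda,\mathbf{x}_\lambda,\mathbf{i}_\lambda,\mathbf{v}_\lambda,t)=0$ with $\mathbf{x}_\lambda:\mathcal{I}\to\mathbb{R}^{n_\mathrm{dof}}$, $\mathbf{i}_\lambda,\mathbf{v}_\lambda:\mathcal{I}\to\mathbb{R}^{n_\lambda}$, such that at most one differentiation $\frac{\mathrm{d}}{\mathrm{d}t}\mathbf{F}=0$ is needed to obtain from $\mathbf{F}=0$ and $\frac{\mathrm{d}}{\mathrm{d}t}\mathbf{F}=0$ (by algebraic manipulations) a system $\frac{\mathrm{d}}{\mathrm{d}t}\mathbf{x}_\lambda=\mathbf{f}_\mathbf{x}(\mathbf{x}_\lambda,\mathbf{i}_\lambda,\mathbf{v}_\lambda,t)$, $\frac{\mathrm{d}}{\mathrm{d}t}\phi(\mathbf{i}_\lambda,\mathbf{x}_\lambda,t)=\mathbf{f}_\phi(\mathbf{x}_\lambda,\mathbf{i}_\lambda,\mathbf{v}_\lambda,t)$, where $\partial\phi/\partial\mathbf{i}_\lambda$ is regular and $\frac{\partial}{\partial\mathbf{v}_\lambda}\Big((\frac{\partial\phi}{\partial\mathbf{i}_\lambda})^{-1}(-\frac{\partial\phi}{\partial\mathbf{x}_\lambda}\mathbf{f}_\mathbf{x}-\frac{\partial\phi}{\partial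 t}+\mathbf{f}_\phi)\Big)$ is positive definite. Here $\mathbf{t}_\mathrm{red}$ are the gauged degrees of freedom of the electric vector potential in the conducting region, $\Psi$ those of the magnetic scalar potential, $\mathbf{i}_\mathrm{s},\mathbf{v}_\mathrm{s}$ the coil currents and voltages. *)

theory Defs
  imports "HOL-Analysis.Analysis"
begin

definition pos_def_map :: "('i::real_inner \<Rightarrow> 'i) \<Rightarrow> bool" where
  "pos_def_map L \<longleftrightarrow> (\<forall>h. h \<noteq> 0 \<longrightarrow> h \<bullet> L h > 0)"

text \<open>The jets (derivative values) are treated as independent
  algebraic variables; "obtained by algebraic manipulations from F = 0 (and dF/dt = 0)"
  is rendered as "is a logical consequence of".  The total time derivative of F is
  D F (x'', i'', x', i', v', 1).\<close>

definition phi_di :: "('i::real_normed_vector \<times> 'x::real_normed_vector \<times> real \<Rightarrow> 'i)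
    \<Rightarrow> 'i \<Rightarrow> 'x \<Rightarrow> real \<Rightarrow> 'i \<Rightarrow> 'i" where
  "phi_di phi i x t = (\<lambda>h. frechet_derivative phi (at (i, x, t)) (h, 0, 0))"

definition phi_dx :: "('i::real_normed_vector \<times> 'x::real_normed_vector \<times> real \<Rightarrow> 'i)
    \<Rightarrow> 'i \<Rightarrow> 'x \<Rightarrow> real \<Rightarrow> 'x \<Rightarrow> 'i" where
  "phi_dx phi i x t = (\<lambda>h. frechet_derivative phi (at (i, x, t)) (0, h, 0))"

definition phi_dt :: "('i::real_normed_vector \<times> 'x::real_normed_vector \<times> real \<Rightarrow> 'i)
    \<Rightarrow> 'i \<Rightarrow> 'x \<Rightarrow> real \<Rightarrow> 'i" where
  "phi_dt phi i x t = frechet_derivative phi (at (i, x, t)) (0, 0, 1)"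

definition reduced_system ::
  "('x \<Rightarrow> 'i \<Rightarrow> 'i \<Rightarrow> real \<Rightarrow> 'x) \<Rightarrow> ('x \<Rightarrow> 'i \<Rightarrow> 'i \<Rightarrow> real \<Rightarrow> 'i)
   \<Rightarrow> ('i::real_normed_vector \<times> 'x::real_normed_vector \<times> real \<Rightarrow> 'i)
   \<Rightarrow> 'x \<Rightarrow> 'i \<Rightarrow> 'x \<Rightarrow> 'i \<Rightarrow> 'i \<Rightarrow> real \<Rightarrow> bool" where
  "reduced_system fx fphi phi dx di x i v t \<longleftrightarrow>
     dx = fx x i v t \<and>
     frechet_derivative phi (at (i, x, t)) (di, dx, 1) = fphi x i v t"

definition inductance_like ::
  "('x::euclidean_space \<times> 'i::euclidean_space \<times> 'x \<times> 'i \<times> 'i \<times> real \<Rightarrow> 'r::real_normed_vector)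
   \<Rightarrow> bool" where
  "inductance_like F \<longleftrightarrow>
    (\<exists>(fx :: 'x \<Rightarrow> 'i \<Rightarrow> 'i \<Rightarrow> real \<Rightarrow> 'x) (fphi :: 'x \<Rightarrow> 'i \<Rightarrow> 'i \<Rightarrow> real \<Rightarrow> 'i)
        (phi :: 'i \<times> 'x \<times> real \<Rightarrow> 'i).
       (\<forall>p. phi differentiable (at p)) \<and>
       (\<forall>i x t. bij (phi_di phi i x t)) \<and>
       (\<forall>x i t v.
          (\<lambda>w. inv (phi_di phi i x t)
                 (- phi_dx phi i x t (fx x i w t) - phi_dt phi i x t + fphi x i w t))
            differentiable (at v) \<and>
          pos_def_map (frechet_derivative
            (\<lambda>w. inv (phi_di phi i x t)
                   (- phi_dx phi i x t (fx x i w t) - phi_dt phi i x t + fphi x i w t))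
            (at v))) \<and>
       ((\<forall>dx di x i v t. F (dx, di, x, i, v, t) = 0 \<longrightarrow>
            reduced_system fx fphi phi dx di x i v t)
        \<or>
        ((\<forall>p. F differentiable (at p)) \<and>
         (\<forall>dx di x i v t ddx ddi dv.
            F (dx, di, x, i, v, t) = 0 \<longrightarrow>
            frechet_derivative F (at (dx, di, x, i, v, t)) (ddx, ddi, dx, di, dv, 1) = 0 \<longrightarrow>
            reduced_system fx fphi phi dx di x i v t))))"

definition TOmega_DAE ::
  "real^'n^'n \<Rightarrow> real^'n^'m \<Rightarrow> real^'n^'n \<Rightarrow> real^'n^'n \<Rightarrow> real^'k^'n \<Rightarrow> real^'s^'n
   \<Rightarrow> (((real^'k) \<times> (real^'m)) \<times> (real^'s) \<times> ((real^'k) \<times> (real^'m)) \<times> (real^'s) \<times> (real^'s) \<times> real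
       \<Rightarrow> (real^'k) \<times> (real^'m) \<times> (real^'s))" where
  "TOmega_DAE C S M\<^sub>\<mu> M\<^sub>\<rho> P Y =
     (\<lambda>((dtr, d\<Psi>), di, (tr, \<Psi>), i, v, t).
        let K\<^sub>\<rho> = transpose P ** transpose C ** M\<^sub>\<rho> ** C ** P;
            dB = P *v dtr + transpose S *v d\<Psi> + Y *v di;
            B = P *v tr + transpose S *v \<Psi> + Y *v i
        in (K\<^sub>\<rho> *v tr + transpose P *v (M\<^sub>\<mu> *v dB),
            S *v (M\<^sub>\<mu> *v B),
            transpose Y *v (M\<^sub>\<mu> *v dB) - v))"

end

theory Submission
  imports Defs
begin

lemma tr_dot: "(transpose A *v x) \<bullet> y = x \<bullet> (A *v (y::real^'a))"
  unfolding transpose_matrix_vector by (rule dot_lmul_matrix)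

lemma tr_dot2: "x \<bullet> (transpose A *v y) = (A *v x) \<bullet> (y::real^'a)"
  by (metis tr_dot inner_commute)

declare transpose_matrix_vector [simp del]

lemma inv_zero: "invertible (K::real^'a^'a) \<Longrightarrow> K *v x = 0 \<Longrightarrow> x = 0"
  by (metis invertible_left_inverse matrix_vector_mul_assoc matrix_vector_mul_lid matrix_vector_mult_0_right)

lemma F_explicit:
  "TOmega_DAE C S Mm Mr P Y = (\<lambda>p.
     let dtr = fst (fst p); dPsi = snd (fst p); di = fst (snd p);
         tr = fst (fst (snd (snd p))); Psi = snd (fst (snd (snd p)));
         i = fst (snd (snd (snd p))); v = fst (snd (snd (snd (snd p))))
     in ((transpose P ** transpose C ** Mr ** C ** P) *v tr
           + transpose P *v (Mm *v (P *v dtr + transpose S *v dPsi + Y *v di)),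
         S *v (Mm *v (P *v tr + transpose S *v Psi + Y *v i)),
         transpose Y *v (Mm *v (P *v dtr + transpose S *v dPsi + Y *v di)) - v))"
  unfolding TOmega_DAE_def by (auto simp: Let_def split: prod.splits)

lemma F_linear: "linear (TOmega_DAE C S Mm Mr P Y)"
  unfolding F_explicit
  by (rule linearI) (auto simp: Let_def matrix_vector_right_distrib matrix_vector_mult_scaleR
        algebra_simps scaleR_right_distrib del: transpose_matrix_vector)

theorem proposition6:
  fixes C :: "real^'n^'n" and S :: "real^'n^'m" and M\<^sub>\<mu> :: "real^'n^'n"
    and M\<^sub>\<rho> :: "real^'n^'n" and P :: "real^'k^'n" and Y :: "real^'s^'n"
  assumes Mmu_sym: "transpose M\<^sub>\<mu> = M\<^sub>\<mu>"
    and Mmu_pd: "\<forall>x. x \<noteq> 0 \<longrightarrow> x \<bullet> (M\<^sub>\<mu> *v x) > 0"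
    and ker_ST: "{x. transpose S *v x = 0} = {0}"
    and CST: "C ** transpose S = 0"
    and ker_S: "{x. S *v x = 0} = range (\<lambda>y. transpose C *v y)"
    and K_reg: "invertible (transpose P ** transpose C ** M\<^sub>\<rho> ** C ** P)"
    and Y_cond: "\<forall>x y. x \<noteq> 0 \<longrightarrow> y \<noteq> 0 \<longrightarrow>
                   C *v (Y *v x) \<noteq> 0 \<and> C *v (Y *v x) \<noteq> C *v (P *v y)"
  shows "inductance_like (TOmega_DAE C S M\<^sub>\<mu> M\<^sub>\<rho> P Y)"
proof -
  define K where "K = transpose P ** transpose C ** M\<^sub>\<rho> ** C ** P"
  define G :: "(real^'k) \<times> (real^'m) \<times> (real^'s) \<Rightarrow> real^'n"
    where "G = (\<lambda>u. P *v fst u + transpose S *v fst (snd u) + Y *v snd (snd u))"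
  define A :: "(real^'k) \<times> (real^'m) \<times> (real^'s) \<Rightarrow> (real^'k) \<times> (real^'m) \<times> (real^'s)"
    where "A = (\<lambda>u. (transpose P *v (M\<^sub>\<mu> *v G u), S *v (M\<^sub>\<mu> *v G u), transpose Y *v (M\<^sub>\<mu> *v G u)))"
  have G_inj: "G u = 0 \<Longrightarrow> u = 0" for u
  proof -
    obtain a b c where u: "u = (a, b, c)" by (cases u) auto
    assume "G u = 0"
    hence g: "P *v a + transpose S *v b + Y *v c = 0" by (simp add: G_def u)
    have CS0: "C *v (transpose S *v b) = 0"
      by (simp add: matrix_vector_mul_assoc CST)
    have "C *v (P *v a + transpose S *v b + Y *v c) = 0" using g by simp
    hence cpa: "C *v (P *v a) + C *v (Y *v c) = 0"
      by (simp add: matrix_vector_right_distrib CS0)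
    have c0: "c = 0"
    proof (rule ccontr)
      assume "c \<noteq> 0"
      show False
      proof (cases "a = 0")
        case True thus False using Y_cond \<open>c \<noteq> 0\<close> cpa by auto
      next
        case False
        have "C *v (Y *v c) = C *v (P *v (- a))"
          using cpa by (simp add: vec.neg) (metis add.commute add_eq_0_iff)
        thus False using Y_cond \<open>c \<noteq> 0\<close> False by (metis neg_equal_0_iff_equal)
      qed
    qed
    hence "C *v (P *v a) = 0" using cpa by simp
    hence "K *v a = 0" unfolding K_def by (simp add: matrix_vector_mul_assoc[symmetric])
    hence a0: "a = 0" using inv_zero K_reg K_def by blast
    hence "transpose S *v b = 0" using g c0 by simp
    hence "b = 0" using ker_ST by blast
    thus ?thesis using a0 c0 u by (simp add: zero_prod_def)
  qed
  have uAu: "u \<bullet> A u = G u \<bullet> (M\<^sub>\<mu> *v G u)" for u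
    by (cases u) (simp add: A_def G_def tr_dot tr_dot2 inner_add_left inner_add_right algebra_simps)
  have G_lin: "linear G"
    unfolding G_def by (rule linearI) (auto simp: matrix_vector_right_distrib matrix_vector_mult_scaleR algebra_simps)
  have A_lin: "linear A"
    unfolding A_def by (rule linearI) (auto simp: linear_add[OF G_lin] linear_scale[OF G_lin]
        matrix_vector_right_distrib matrix_vector_mult_scaleR)
  have A_inj: "inj A"
  proof (rule linear_injective_0[THEN iffD2, OF A_lin], intro allI impI)
    fix u assume "A u = 0"
    hence "u \<bullet> A u = 0" by simp
    hence "G u = 0" using uAu Mmu_pd by (metis less_irrefl)
    thus "u = 0" using G_inj by blast
  qed
  have A_surj: "surj A" using eucl.linear_injective_imp_surjective[OF A_lin A_inj] by simp
  have AinvA: "A (inv A w) = w" for w using A_surj by (simp add: surj_f_inv_f)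
  have Ainv_lin: "linear (inv A)" using eucl.inj_linear_imp_inv_linear[OF A_lin A_inj] .
  define L where "L = (\<lambda>w. snd (snd (inv A (0, 0, w))))"
  have L_lin: "linear L" unfolding L_def
  proof (rule linearI)
    fix b1 b2 :: "real^'s"
    have "(0::real^'k, 0::real^'m, b1 + b2) = (0, 0, b1) + (0, 0, b2)" by simp
    thus "snd (snd (inv A (0, 0, b1 + b2))) = snd (snd (inv A (0, 0, b1))) + snd (snd (inv A (0, 0, b2)))"
      using linear_add[OF Ainv_lin, of "(0,0,b1)" "(0,0,b2)"] by simp
  next
    fix r :: real and b :: "real^'s"
    have "(0::real^'k, 0::real^'m, r *\<^sub>R b) = r *\<^sub>R (0, 0, b)" by simp
    thus "snd (snd (inv A (0, 0, r *\<^sub>R b))) = r *\<^sub>R snd (snd (inv A (0, 0, b)))"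
      using linear_scale[OF Ainv_lin, of r "(0,0,b)"] by simp
  qed
  define sol where "sol = (\<lambda>(x::(real^'k) \<times> (real^'m)) (w::real^'s). inv A (- (K *v fst x), 0, w))"
  define fx where "fx = (\<lambda>(x::(real^'k) \<times> (real^'m)) (i::real^'s) (w::real^'s) (t::real).
      (fst (sol x w), fst (snd (sol x w))))"
  define fphi where "fphi = (\<lambda>(x::(real^'k) \<times> (real^'m)) (i::real^'s) (w::real^'s) (t::real).
      snd (snd (sol x 0)) + L w)"
  have fphi_sol: "fphi x i w t = snd (snd (sol x w))" for x i w t
  proof -
    have "sol x w = sol x 0 + inv A (0, 0, w)"
      unfolding sol_def by (simp add: linear_add[OF Ainv_lin, symmetric])
    thus ?thesis unfolding fphi_def L_def by simp
  qed
  define phi :: "(real^'s) \<times> ((real^'k) \<times> (real^'m)) \<times> real \<Rightarrow> real^'s" where "phi = fst"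
  have phi_der: "frechet_derivative phi (at p) = fst" for p
    unfolding phi_def
    by (rule frechet_derivative_at[symmetric], rule bounded_linear_imp_has_derivative, rule bounded_linear_fst)
  have phi_di: "phi_di phi i x t = id" for i x t
    unfolding phi_di_def phi_der by (simp add: id_def)
  have phi_dx: "phi_dx phi i x t = (\<lambda>h. 0)" for i x t
    unfolding phi_dx_def phi_der by simp
  have phi_dt: "phi_dt phi i x t = 0" for i x t
    unfolding phi_dt_def phi_der by simp
  have Lder: "((\<lambda>w. inv (phi_di phi i x t)
                 (- phi_dx phi i x t (fx x i w t) - phi_dt phi i x t + fphi x i w t))
           has_derivative L) (at v)" for x i t v
  proof -
    have "((\<lambda>w. snd (snd (sol x 0)) + L w) has_derivative (\<lambda>w. 0 + L w)) (at v)"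
      by (intro derivative_intros bounded_linear_imp_has_derivative
          L_lin[unfolded linear_conv_bounded_linear])
    thus ?thesis by (simp add: phi_di phi_dx phi_dt fphi_def)
  qed
  have L_pd: "pos_def_map L"
    unfolding pos_def_map_def
  proof (intro allI impI)
    fix h :: "real^'s" assume h: "h \<noteq> 0"
    define u where "u = inv A (0, 0, h)"
    have Au: "A u = (0, 0, h)" using AinvA u_def by simp
    have "u \<noteq> 0" using Au h A_lin by (metis linear_0 prod.inject zero_prod_def)
    hence "G u \<noteq> 0" using linear_0[OF G_lin] G_inj by blast
    hence "0 < u \<bullet> A u" using uAu Mmu_pd by simp
    also have "u \<bullet> A u = snd (snd u) \<bullet> h" using Au by (cases u) simp
    finally show "0 < h \<bullet> L h" by (simp add: L_def u_def inner_commute)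
  qed
  have F_der: "frechet_derivative (TOmega_DAE C S M\<^sub>\<mu> M\<^sub>\<rho> P Y) (at p) = TOmega_DAE C S M\<^sub>\<mu> M\<^sub>\<rho> P Y" for p
    by (rule frechet_derivative_at[symmetric], rule bounded_linear_imp_has_derivative,
        rule F_linear[unfolded linear_conv_bounded_linear])
  show ?thesis
    unfolding inductance_like_def
  proof (intro exI[of _ fx] exI[of _ fphi] exI[of _ phi] conjI disjI2)
    show "\<forall>p. phi differentiable at p"
      unfolding phi_def by (intro allI bounded_linear_imp_differentiable bounded_linear_fst)
    show "\<forall>i x t. bij (phi_di phi i x t)" by (simp add: phi_di)
    show "\<forall>x i t v. (\<lambda>w. inv (phi_di phi i x t)
                 (- phi_dx phi i x t (fx x i w t) - phi_dt phi i x t + fphi x i w t))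
            differentiable (at v) \<and> pos_def_map (frechet_derivative (\<lambda>w. inv (phi_di phi i x t)
                 (- phi_dx phi i x t (fx x i w t) - phi_dt phi i x t + fphi x i w t)) (at v))"
    proof (intro allI conjI)
      fix x i t v
      show "(\<lambda>w. inv (phi_di phi i x t)
                 (- phi_dx phi i x t (fx x i w t) - phi_dt phi i x t + fphi x i w t))
            differentiable (at v)" using Lder unfolding differentiable_def by blast
      show "pos_def_map (frechet_derivative (\<lambda>w. inv (phi_di phi i x t)
                 (- phi_dx phi i x t (fx x i w t) - phi_dt phi i x t + fphi x i w t)) (at v))"
        using frechet_derivative_at[OF Lder] L_pd by simp
    qed
    show "\<forall>p. TOmega_DAE C S M\<^sub>\<mu> M\<^sub>\<rho> P Y differentiable at p"
      by (intro allI bounded_linear_imp_differentiable F_linear[unfolded linear_conv_bounded_linear])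
    show "\<forall>dx di x i v t ddx ddi dv.
            TOmega_DAE C S M\<^sub>\<mu> M\<^sub>\<rho> P Y (dx, di, x, i, v, t) = 0 \<longrightarrow>
            frechet_derivative (TOmega_DAE C S M\<^sub>\<mu> M\<^sub>\<rho> P Y) (at (dx, di, x, i, v, t)) (ddx, ddi, dx, di, dv, 1) = 0 \<longrightarrow>
            reduced_system fx fphi phi dx di x i v t"
    proof (intro allI impI)
      fix dx di x i v t ddx ddi dv
      assume F0: "TOmega_DAE C S M\<^sub>\<mu> M\<^sub>\<rho> P Y (dx, di, x, i, v, t) = 0"
        and dF0: "frechet_derivative (TOmega_DAE C S M\<^sub>\<mu> M\<^sub>\<rho> P Y) (at (dx, di, x, i, v, t)) (ddx, ddi, dx, di, dv, 1) = 0"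
      define u where "u = (fst dx, snd dx, di)"
      have e1: "K *v fst x + transpose P *v (M\<^sub>\<mu> *v G u) = 0"
        using F0 by (simp add: F_explicit K_def G_def u_def Let_def zero_prod_def)
      have e2: "S *v (M\<^sub>\<mu> *v G u) = 0"
        using dF0 unfolding F_der by (simp add: F_explicit G_def u_def Let_def zero_prod_def)
      have e3: "transpose Y *v (M\<^sub>\<mu> *v G u) = v"
        using F0 by (simp add: F_explicit G_def u_def Let_def zero_prod_def)
      have "A u = (- (K *v fst x), 0, v)"
        using e1 e2 e3 by (simp add: A_def eq_neg_iff_add_eq_0 add.commute)
      hence "u = sol x v" unfolding sol_def using A_inj by (metis inv_f_f)
      thus "reduced_system fx fphi phi dx di x i v t"
        unfolding reduced_system_def
        by (simp add: fx_def fphi_sol phi_der u_def[symmetric])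
          (metis fst_conv snd_conv prod.collapse u_def)
    qed
  qed
qed

end
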